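(* (a) There exist connected graphs $G$ with $O_{\rm SR}(G)=\mathcal{M}=O_{\rm R}(G)$. (b) There exist connected graphs $G$ with $O_{\rm SR}(G)=\mathcal{N}=O_{\rm R}(G)$. (c) There exist connected graphs $G$ with $O_{\rm SR}(G)=\mathcal{B}=O_{\rm R}(G)$. (d) There exist connected graphs $G$ with $O_{\rm SR}(G)=\mathcal{N}$ and $O_{\rm R}(G)=\mathcal{M}$. (e) There exist connected graphs $G$ with $O_{\rm SR}(G)=\mathcal{B}$ and $O_{\rm R}(G)=\mathcal{M}$. (f) There exist connected graphs $G$ with $O_{\rm SR}(G)=\mathcal{B}$ and $O_{\rm R}(G)=\mathcal{N}$.
   Context: All graphs are finite, simple and undirected; $d(x,y)$ is the shortest-path distance. For a connected graph $G$, a set $R\subseteq V(G)$ is a resolving set if for all distinct $x,y\in V(G)$ there is $z\in R$ with $d(x,z)\ne d(y,z)$; a set $S\subseteq V(G)$ is a strong resolving set if for all distinct $x,y\in V(G)$ there exists $z\in S$ such that $x$ lies on a $y$–$z$ geodesic or $y$ lies on an $x$–$z$ geodesic. In the Maker–Breaker resolving game (resp. strong resolving game) on $G$, Maker and Breaker alternately select a not-yet-chosen vertex of $G$; Maker wins if his selected vertices contain a resolving set (resp. strong resolving set) of $G$, and Breaker wins otherwise. In the M-game Maker moves first, in the B-game Breaker moves first. The outcome $O_{\rm R}(G)$ (resp. $O_{\rm SR}(G)$) is $\mathcal{M}$ if Maker has a winning strategy in both the M-game and the B-game, $\mathcal{B}$ if Breaker has a winning strategy in both, and $\mathcal{N}$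 if the first player has a winning strategy in each. *)

theory Defs
  imports Main
begin

definition simple_graph :: "nat set \<Rightarrow> (nat \<Rightarrow> nat \<Rightarrow> bool) \<Rightarrow> bool" where
  "simple_graph V E \<longleftrightarrow> finite V \<and>
     (\<forall>x y. E x y \<longrightarrow> x \<in> V \<and> y \<in> V \<and> x \<noteq> y \<and> E y x)"

definition is_walk :: "(nat \<Rightarrow> nat \<Rightarrow> bool) \<Rightarrow> nat list \<Rightarrow> bool" where
  "is_walk E p \<longleftrightarrow> p \<noteq> [] \<and> (\<forall>i. Suc i < length p \<longrightarrow> E (p ! i) (p ! Suc i))"

definition walk_between :: "(nat \<Rightarrow> nat \<Rightarrow> bool) \<Rightarrow> nat \<Rightarrow> nat \<Rightarrow> nat list \<Rightarrow> bool" where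
  "walk_between E x y p \<longleftrightarrow> is_walk E p \<and> hd p = x \<and> last p = y"

definition connected_graph :: "nat set \<Rightarrow> (nat \<Rightarrow> nat \<Rightarrow> bool) \<Rightarrow> bool" where
  "connected_graph V E \<longleftrightarrow> simple_graph V E \<and> V \<noteq> {} \<and>
     (\<forall>x\<in>V. \<forall>y\<in>V. \<exists>p. walk_between E x y p)"

definition dist :: "(nat \<Rightarrow> nat \<Rightarrow> bool) \<Rightarrow> nat \<Rightarrow> nat \<Rightarrow> nat" where
  "dist E x y = (LEAST n. \<exists>p. walk_between E x y p \<and> length p = Suc n)"

definition geodesic :: "(nat \<Rightarrow> nat \<Rightarrow> bool) \<Rightarrow> nat \<Rightarrow> nat \<Rightarrow> nat list \<Rightarrow> bool" where
  "geodesic E y z p \<longleftrightarrow> walk_between E y z p \<and> length p = Suc (dist E y z)"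

definition lies_on_geodesic :: "(nat \<Rightarrow> nat \<Rightarrow> bool) \<Rightarrow> nat \<Rightarrow> nat \<Rightarrow> nat \<Rightarrow> bool" where
  "lies_on_geodesic E x y z \<longleftrightarrow> (\<exists>p. geodesic E y z p \<and> x \<in> set p)"

definition resolving_set :: "nat set \<Rightarrow> (nat \<Rightarrow> nat \<Rightarrow> bool) \<Rightarrow> nat set \<Rightarrow> bool" where
  "resolving_set V E R \<longleftrightarrow> R \<subseteq> V \<and>
     (\<forall>x\<in>V. \<forall>y\<in>V. x \<noteq> y \<longrightarrow> (\<exists>z\<in>R. dist E x z \<noteq> dist E y z))"

definition strong_resolving_set :: "nat set \<Rightarrow> (nat \<Rightarrow> nat \<Rightarrow> bool) \<Rightarrow> nat set \<Rightarrow> bool" where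
  "strong_resolving_set V E S \<longleftrightarrow> S \<subseteq> V \<and>
     (\<forall>x\<in>V. \<forall>y\<in>V. x \<noteq> y \<longrightarrow>
        (\<exists>z\<in>S. lies_on_geodesic E x y z \<or> lies_on_geodesic E y x z))"

text \<open>Maker-Breaker game on board V with Maker's winning condition W (on Maker's set).
  Position: Maker's vertices M, Breaker's vertices B, and whether it is Maker's turn.
  maker_wins W V M B t: Maker has a winning strategy from this position.\<close>
inductive maker_wins :: "(nat set \<Rightarrow> bool) \<Rightarrow> nat set \<Rightarrow> nat set \<Rightarrow> nat set \<Rightarrow> bool \<Rightarrow> bool"
  for W :: "nat set \<Rightarrow> bool" and V :: "nat set" where
  terminal: "V - (M \<union> B) = {} \<Longrightarrow> W M \<Longrightarrow> maker_wins W V M B t"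
| maker_move: "v \<in> V - (M \<union> B) \<Longrightarrow> maker_wins W V (insert v M) B False \<Longrightarrow> maker_wins W V M B True"
| breaker_move: "V - (M \<union> B) \<noteq> {} \<Longrightarrow>
     (\<forall>v \<in> V - (M \<union> B). maker_wins W V M (insert v B) True) \<Longrightarrow> maker_wins W V M B False"

datatype outcome = OutM | OutN | OutB | OutSecond

text \<open>Outcome: M if Maker wins both the M-game (Maker first) and the B-game (Breaker first);
  B if Breaker wins both (i.e. Maker wins neither); N if the first player wins each.
  OutSecond (second player wins each) is included only for totality.\<close>
definition game_outcome :: "(nat set \<Rightarrow> bool) \<Rightarrow> nat set \<Rightarrow> outcome" where
  "game_outcome W V =
     (let mg = maker_wins W V {} {} True; bg = maker_wins W V {} {} False in
      if mg \<and> bg then OutM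
      else if \<not> mg \<and> \<not> bg then OutB
      else if mg \<and> \<not> bg then OutN
      else OutSecond)"

definition O_R :: "nat set \<Rightarrow> (nat \<Rightarrow> nat \<Rightarrow> bool) \<Rightarrow> outcome" where
  "O_R V E = game_outcome (\<lambda>M. \<exists>R \<subseteq> M. resolving_set V E R) V"

definition O_SR :: "nat set \<Rightarrow> (nat \<Rightarrow> nat \<Rightarrow> bool) \<Rightarrow> outcome" where
  "O_SR V E = game_outcome (\<lambda>M. \<exists>S \<subseteq> M. strong_resolving_set V E S) V"

end

theory Submission
  imports Defs
begin

lemma is_walk_single[simp]: "is_walk E [a]"
  by (simp add: is_walk_def)

lemma is_walk_Cons2[simp]: "is_walk E (a # b # q) \<longleftrightarrow> E a b \<and> is_walk E (b # q)"
proof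
  assume h: "is_walk E (a # b # q)"
  have "Suc 0 < length (a # b # q)" by simp
  then have "E ((a # b # q) ! 0) ((a # b # q) ! Suc 0)" using h unfolding is_walk_def by blast
  then have "E a b" by simp
  moreover have "is_walk E (b # q)" unfolding is_walk_def
  proof (intro conjI allI impI)
    fix i assume "Suc i < length (b # q)"
    then have "Suc (Suc i) < length (a # b # q)" by simp
    then have "E ((a # b # q) ! Suc i) ((a # b # q) ! Suc (Suc i))" using h unfolding is_walk_def by blast
    then show "E ((b # q) ! i) ((b # q) ! Suc i)" by simp
  qed simp
  ultimately show "E a b \<and> is_walk E (b # q)" by simp
next
  assume h: "E a b \<and> is_walk E (b # q)"
  show "is_walk E (a # b # q)" unfolding is_walk_def
  proof (intro conjI allI impI)
    fix i assume i: "Suc i < length (a # b # q)"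
    show "E ((a # b # q) ! i) ((a # b # q) ! Suc i)"
    proof (cases i)
      case 0 then show ?thesis using h by simp
    next
      case (Suc j)
      then have "Suc j < length (b # q)" using i by simp
      then have "E ((b # q) ! j) ((b # q) ! Suc j)" using h unfolding is_walk_def by blast
      then show ?thesis using Suc by simp
    qed
  qed simp
qed

lemma is_walk_app: "is_walk E (p @ [x]) \<Longrightarrow> is_walk E (x # q) \<Longrightarrow> is_walk E (p @ x # q)"
proof (induction p)
  case Nil then show ?case by simp
next
  case (Cons a p)
  show ?case
  proof (cases p)
    case Nil then show ?thesis using Cons.prems by simp
  next
    case (Cons b p')
    then show ?thesis using Cons.prems Cons.IH by simp
  qed
qed

lemma is_walk_split: "is_walk E (p @ x # q) \<Longrightarrow> is_walk E (p @ [x]) \<and> is_walk E (x # q)"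
proof (induction p)
  case Nil
  then show ?case by simp
next
  case (Cons a p)
  show ?case
  proof (cases p)
    case Nil then show ?thesis using Cons.prems by simp
  next
    case (Cons b p')
    then show ?thesis using Cons.prems Cons.IH by simp
  qed
qed

lemma walk_concat:
  assumes "walk_between E y x q1" "walk_between E x z q2"
  shows "walk_between E y z (butlast q1 @ q2) \<and> length (butlast q1 @ q2) = length q1 + length q2 - 1
         \<and> x \<in> set (butlast q1 @ q2)"
proof -
  have ne1: "q1 \<noteq> []" and ne2: "q2 \<noteq> []" using assms by (auto simp: walk_between_def is_walk_def)
  have e1: "q1 = butlast q1 @ [x]" using ne1 assms by (metis append_butlast_last_id walk_between_def)
  have e2: "q2 = x # tl q2" using ne2 assms by (metis hd_Cons_tl walk_between_def)
  have w1: "is_walk E (butlast q1 @ [x])" using e1 assms by (metis walk_between_def)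
  have w2: "is_walk E (x # tl q2)" using e2 assms by (metis walk_between_def)
  have w: "is_walk E (butlast q1 @ x # tl q2)" using is_walk_app[OF w1 w2] .
  have eq: "butlast q1 @ q2 = butlast q1 @ x # tl q2" using e2 by simp
  have hd: "hd (butlast q1 @ q2) = y"
  proof (cases "butlast q1")
    case Nil
    then have "q1 = [x]" using e1 by simp
    then have "y = x" using assms by (simp add: walk_between_def)
    then show ?thesis using Nil e2 by (metis append_Nil list.sel(1))
  next
    case (Cons c r)
    then have "hd q1 = c" using e1 by (metis append_Cons list.sel(1))
    then show ?thesis using Cons assms by (simp add: walk_between_def)
  qed
  have lst: "last (butlast q1 @ q2) = z" using ne2 assms by (simp add: walk_between_def)
  have xin: "x \<in> set q2" using e2 by (metis list.set_intros(1))
  have len: "length (butlast q1 @ q2) = length q1 + length q2 - 1" using ne1 by (cases q1) auto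
  have "walk_between E y z (butlast q1 @ q2)" using w eq hd lst by (simp add: walk_between_def)
  then show ?thesis using len xin by simp
qed

lemma dist_le: "walk_between E x y p \<Longrightarrow> dist E x y \<le> length p - 1"
  unfolding dist_def
  by (rule Least_le, rule exI[of _ p], auto simp: walk_between_def is_walk_def)

lemma dist_ex: "walk_between E x y p \<Longrightarrow> \<exists>q. walk_between E x y q \<and> length q = Suc (dist E x y)"
proof -
  assume "walk_between E x y p"
  then have "\<exists>n. \<exists>q. walk_between E x y q \<and> length q = Suc n"
    by (intro exI[of _ "length p - 1"] exI[of _ p]) (auto simp: walk_between_def is_walk_def)
  then show ?thesis unfolding dist_def by (rule LeastI_ex)
qed

lemma lies_iff:
  assumes conn: "\<forall>a\<in>V. \<forall>b\<in>V. \<exists>p. walk_between E a b p"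
    and V: "x \<in> V" "y \<in> V" "z \<in> V"
  shows "lies_on_geodesic E x y z \<longleftrightarrow> dist E y x + dist E x z = dist E y z"
proof -
  obtain q0 where "walk_between E y x q0" using conn V by blast
  then obtain q1 where q1: "walk_between E y x q1" "length q1 = Suc (dist E y x)"
    using dist_ex by blast
  obtain q0' where "walk_between E x z q0'" using conn V by blast
  then obtain q2 where q2: "walk_between E x z q2" "length q2 = Suc (dist E x z)"
    using dist_ex by blast
  have c: "walk_between E y z (butlast q1 @ q2) \<and> length (butlast q1 @ q2) = length q1 + length q2 - 1
         \<and> x \<in> set (butlast q1 @ q2)" using walk_concat[OF q1(1) q2(1)] .
  have tri: "dist E y z \<le> dist E y x + dist E x z"
    using dist_le[of E y z "butlast q1 @ q2"] c q1 q2 by simp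
  show ?thesis
  proof
    assume "lies_on_geodesic E x y z"
    then obtain p where p: "geodesic E y z p" "x \<in> set p" unfolding lies_on_geodesic_def by blast
    obtain p1 p2 where sp: "p = p1 @ x # p2" using split_list[OF p(2)] by blast
    have "is_walk E (p1 @ x # p2)" using p(1) sp by (simp add: geodesic_def walk_between_def)
    then have w: "is_walk E (p1 @ [x]) \<and> is_walk E (x # p2)" by (rule is_walk_split)
    have h1: "hd (p1 @ [x]) = y" using p(1) sp
      by (cases p1) (auto simp: geodesic_def walk_between_def)
    have "walk_between E y x (p1 @ [x])" using w h1 by (simp add: walk_between_def)
    then have d1: "dist E y x \<le> length p1" using dist_le[of E y x "p1 @ [x]"] by simp
    have "walk_between E x z (x # p2)" using w p(1) sp by (simp add: geodesic_def walk_between_def)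
    then have d2: "dist E x z \<le> length p2" using dist_le[of E x z "x # p2"] by simp
    have "length p = Suc (dist E y z)" using p(1) by (simp add: geodesic_def)
    then show "dist E y x + dist E x z = dist E y z" using d1 d2 tri sp by simp
  next
    assume "dist E y x + dist E x z = dist E y z"
    then have "geodesic E y z (butlast q1 @ q2)" using c q1 q2 by (simp add: geodesic_def)
    then show "lies_on_geodesic E x y z" using c unfolding lies_on_geodesic_def by blast
  qed
qed

lemma walk_lb:
  assumes DL: "\<forall>x y. E x y \<longrightarrow> D y \<le> Suc (D x)"
  shows "is_walk E p \<Longrightarrow> D (last p) \<le> D (hd p) + (length p - 1)"
proof (induction p)
  case Nil then show ?case by (simp add: is_walk_def)
next
  case (Cons a q)
  show ?case
  proof (cases q)
    case Nil then show ?thesis by simp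
  next
    case (Cons b q')
    then have "E a b" "is_walk E q" using Cons.prems by auto
    then have "D (last q) \<le> D b + (length q - 1)" "D b \<le> Suc (D a)" using Cons.IH DL Cons by auto
    then show ?thesis using Cons by simp
  qed
qed

lemma walk_ub:
  assumes DP: "\<forall>v\<in>V. v \<noteq> u \<longrightarrow> (\<exists>w\<in>V. E w v \<and> Suc (D w) = D v)" and D0: "D u = 0"
  shows "\<forall>v\<in>V. D v = n \<longrightarrow> (\<exists>p. walk_between E u v p \<and> length p = Suc n)"
proof (induction n)
  case 0
  show ?case
  proof (intro ballI impI)
    fix v assume v: "v \<in> V" "D v = 0"
    have "v = u"
    proof (rule ccontr)
      assume "v \<noteq> u"
      then obtain w where "Suc (D w) = D v" using DP v by blast
      then show False using v by simp
    qed
    then show "\<exists>p. walk_between E u v p \<and> length p = Suc 0"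
      by (intro exI[of _ "[u]"]) (simp add: walk_between_def)
  qed
next
  case (Suc n)
  show ?case
  proof (intro ballI impI)
    fix v assume v: "v \<in> V" "D v = Suc n"
    then have "v \<noteq> u" using D0 by auto
    then obtain w where w: "w \<in> V" "E w v" "Suc (D w) = D v" using DP v by blast
    then obtain p where p: "walk_between E u w p" "length p = Suc n" using Suc.IH v by auto
    have "walk_between E w v [w, v]" using w by (simp add: walk_between_def)
    from walk_concat[OF p(1) this] p
    show "\<exists>p. walk_between E u v p \<and> length p = Suc (Suc n)" by auto
  qed
qed

lemma dist_eq:
  assumes D0: "D u u = 0"
    and DL: "\<forall>x y. E x y \<longrightarrow> D u y \<le> Suc (D u x)"
    and DP: "\<forall>v\<in>V. v \<noteq> u \<longrightarrow> (\<exists>w\<in>V. E w v \<and> Suc (D u w) = D u v)"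
    and v: "v \<in> V"
  shows "dist E u v = D u v" "\<exists>p. walk_between E u v p"
proof -
  have ub: "\<exists>p. walk_between E u v p \<and> length p = Suc (D u v)"
    using walk_ub[of V u E "D u" "D u v"] DP D0 v by blast
  then show "\<exists>p. walk_between E u v p" by blast
  show "dist E u v = D u v" unfolding dist_def
  proof (rule Least_equality)
    show "\<exists>p. walk_between E u v p \<and> length p = Suc (D u v)" by fact
  next
    fix m assume "\<exists>p. walk_between E u v p \<and> length p = Suc m"
    then obtain p where p: "walk_between E u v p" "length p = Suc m" by blast
    have "D u (last p) \<le> D u (hd p) + (length p - 1)"
      using walk_lb[of E "D u" p] DL p by (simp add: walk_between_def)
    then show "D u v \<le> m" using p D0 by (simp add: walk_between_def)
  qed
qed

fun mw :: "nat \<Rightarrow> (nat set \<Rightarrow> bool) \<Rightarrow> nat list \<Rightarrow> nat set \<Rightarrow> bool \<Rightarrow> bool" where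
  "mw 0 W fr M t = W M"
| "mw (Suc k) W fr M t = (if t then (\<exists>v\<in>set fr. mw k W (remove1 v fr) (insert v M) False)
                          else (\<forall>v\<in>set fr. mw k W (remove1 v fr) M True))"

lemma mw_numeral[simp]: "mw (numeral n) W fr M t = (if t then (\<exists>v\<in>set fr. mw (pred_numeral n) W (remove1 v fr) (insert v M) False)
                          else (\<forall>v\<in>set fr. mw (pred_numeral n) W (remove1 v fr) M True))"
  by (simp add: numeral_eq_Suc)

lemma game_eq:
  "length fr = k \<Longrightarrow> distinct fr \<Longrightarrow> set fr = V - (M \<union> B) \<Longrightarrow> M \<subseteq> V \<Longrightarrow>
   (\<forall>X. X \<subseteq> V \<longrightarrow> W X = W' X) \<Longrightarrow> maker_wins W V M B t = mw k W' fr M t"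
proof (induction k arbitrary: fr M B t)
  case 0
  then have em: "V - (M \<union> B) = {}" by simp
  have "maker_wins W V M B t \<longleftrightarrow> W M"
  proof
    assume "maker_wins W V M B t"
    then show "W M" using em by (cases rule: maker_wins.cases) auto
  next
    assume "W M"
    then show "maker_wins W V M B t" using em by (rule maker_wins.terminal[rotated])
  qed
  then show ?case using 0 by simp
next
  case (Suc k)
  have "fr \<noteq> []" using Suc.prems(1) by auto
  then have "set fr \<noteq> {}" by simp
  then have ne: "V - (M \<union> B) \<noteq> {}" using Suc.prems(3) by argo
  have rem: "\<And>v. v \<in> set fr \<Longrightarrow> length (remove1 v fr) = k \<and> distinct (remove1 v fr)
      \<and> set (remove1 v fr) = set fr - {v}"
    using Suc.prems by (auto simp: length_remove1)
  show ?case
  proof (cases t)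
    case True
    have "maker_wins W V M B True \<longleftrightarrow> (\<exists>v\<in>V - (M \<union> B). maker_wins W V (insert v M) B False)"
    proof
      assume "maker_wins W V M B True"
      then show "\<exists>v\<in>V - (M \<union> B). maker_wins W V (insert v M) B False"
        using ne by (cases rule: maker_wins.cases) auto
    next
      assume "\<exists>v\<in>V - (M \<union> B). maker_wins W V (insert v M) B False"
      then show "maker_wins W V M B True" by (auto intro: maker_wins.maker_move)
    qed
    also have "\<dots> \<longleftrightarrow> (\<exists>v\<in>set fr. mw k W' (remove1 v fr) (insert v M) False)"
    proof (rule bex_cong)
      show "V - (M \<union> B) = set fr" using Suc.prems by simp
    next
      fix v assume v: "v \<in> set fr"
      show "maker_wins W V (insert v M) B False = mw k W' (remove1 v fr) (insert v M) False"
        apply (rule Suc.IH)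
        using rem[OF v] Suc.prems v by auto
    qed
    finally show ?thesis using True by simp
  next
    case False
    have "maker_wins W V M B False \<longleftrightarrow> (\<forall>v\<in>V - (M \<union> B). maker_wins W V M (insert v B) True)"
    proof
      assume "maker_wins W V M B False"
      then show "\<forall>v\<in>V - (M \<union> B). maker_wins W V M (insert v B) True"
        using ne by (cases rule: maker_wins.cases) auto
    next
      assume "\<forall>v\<in>V - (M \<union> B). maker_wins W V M (insert v B) True"
      then show "maker_wins W V M B False" using ne by (auto intro: maker_wins.breaker_move)
    qed
    also have "\<dots> \<longleftrightarrow> (\<forall>v\<in>set fr. mw k W' (remove1 v fr) M True)"
    proof (rule ball_cong)
      show "V - (M \<union> B) = set fr" using Suc.prems by simp
    next
      fix v assume v: "v \<in> set fr"
      show "maker_wins W V M (insert v B) True = mw k W' (remove1 v fr) M True"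
        apply (rule Suc.IH)
        using rem[OF v] Suc.prems v by auto
    qed
    finally show ?thesis using False by simp
  qed
qed

definition outc :: "bool \<Rightarrow> bool \<Rightarrow> outcome" where
  "outc a b = (if a \<and> b then OutM else if \<not> a \<and> \<not> b then OutB else if a \<and> \<not> b then OutN else OutSecond)"

lemma outcome_eq:
  assumes "distinct fr" "set fr = V" "\<forall>X. X \<subseteq> V \<longrightarrow> W X = W' X"
  shows "game_outcome W V = outc (mw (length fr) W' fr {} True) (mw (length fr) W' fr {} False)"
proof -
  have "\<And>t. maker_wins W V {} {} t = mw (length fr) W' fr {} t"
    by (rule game_eq) (use assms in auto)
  then show ?thesis unfolding game_outcome_def outc_def Let_def by simp
qed

definition resD :: "nat set \<Rightarrow> (nat \<Rightarrow> nat \<Rightarrow> nat) \<Rightarrow> nat set \<Rightarrow> bool" where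
  "resD V D X = (\<forall>x\<in>V. \<forall>y\<in>V. x \<noteq> y \<longrightarrow> (\<exists>z\<in>X. D x z \<noteq> D y z))"

definition sresD :: "nat set \<Rightarrow> (nat \<Rightarrow> nat \<Rightarrow> nat) \<Rightarrow> nat set \<Rightarrow> bool" where
  "sresD V D X = (\<forall>x\<in>V. \<forall>y\<in>V. x \<noteq> y \<longrightarrow>
      (\<exists>z\<in>X. D y x + D x z = D y z \<or> D x y + D y z = D x z))"

lemma graph_outcomes:
  assumes sg: "simple_graph V E" "V \<noteq> {}"
    and D0: "\<forall>u\<in>V. D u u = 0"
    and DL: "\<forall>u\<in>V. \<forall>x y. E x y \<longrightarrow> D u y \<le> Suc (D u x)"
    and DP: "\<forall>u\<in>V. \<forall>v\<in>V. v \<noteq> u \<longrightarrow> (\<exists>w\<in>V. E w v \<and> Suc (D u w) = D u v)"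
    and fr: "distinct fr" "set fr = V"
  shows "connected_graph V E \<and>
    O_R V E = outc (mw (length fr) (resD V D) fr {} True) (mw (length fr) (resD V D) fr {} False) \<and>
    O_SR V E = outc (mw (length fr) (sresD V D) fr {} True) (mw (length fr) (sresD V D) fr {} False)"
proof -
  have dE': "dist E u v = D u v \<and> (\<exists>p. walk_between E u v p)" if uv: "u \<in> V" "v \<in> V" for u v
  proof -
    have a1: "D u u = 0" using D0 uv(1) by (rule bspec)
    have a2: "\<forall>x y. E x y \<longrightarrow> D u y \<le> Suc (D u x)" using DL uv(1) by (rule bspec)
    have a3: "\<forall>v\<in>V. v \<noteq> u \<longrightarrow> (\<exists>w\<in>V. E w v \<and> Suc (D u w) = D u v)" using DP uv(1) by (rule bspec)
    show ?thesis using dist_eq[of D u E V v, OF a1 a2 a3 uv(2)] by (rule conjI)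
  qed
  have dE: "\<And>u v. u \<in> V \<Longrightarrow> v \<in> V \<Longrightarrow> dist E u v = D u v" using dE' by blast
  have conn: "\<forall>a\<in>V. \<forall>b\<in>V. \<exists>p. walk_between E a b p" using dE' by blast
  have c: "connected_graph V E" using sg conn by (simp add: connected_graph_def)
  have r: "\<forall>X. X \<subseteq> V \<longrightarrow> (\<exists>R\<subseteq>X. resolving_set V E R) = resD V D X"
  proof (intro allI impI)
    fix X assume X: "X \<subseteq> V"
    show "(\<exists>R\<subseteq>X. resolving_set V E R) = resD V D X"
    proof
      assume "\<exists>R\<subseteq>X. resolving_set V E R"
      then obtain R where R: "R \<subseteq> X" "resolving_set V E R" by blast
      show "resD V D X" unfolding resD_def
      proof (intro ballI impI)
        fix x y assume xy: "x \<in> V" "y \<in> V" "x \<noteq> y"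
        then obtain z where z: "z \<in> R" "dist E x z \<noteq> dist E y z" using R(2) unfolding resolving_set_def by blast
        then have "z \<in> V" using R X by blast
        then show "\<exists>z\<in>X. D x z \<noteq> D y z" using z xy dE R(1) by (metis subsetD)
      qed
    next
      assume h: "resD V D X"
      have "resolving_set V E X" unfolding resolving_set_def
      proof (intro conjI ballI impI)
        show "X \<subseteq> V" by fact
      next
        fix x y assume xy: "x \<in> V" "y \<in> V" "x \<noteq> y"
        then obtain z where z: "z \<in> X" "D x z \<noteq> D y z" using h unfolding resD_def by blast
        then show "\<exists>z\<in>X. dist E x z \<noteq> dist E y z" using xy dE X by (metis subsetD)
      qed
      then show "\<exists>R\<subseteq>X. resolving_set V E R" by blast
    qed
  qed
  have s: "\<forall>X. X \<subseteq> V \<longrightarrow> (\<exists>S\<subseteq>X. strong_resolving_set V E S) = sresD V D X"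
  proof (intro allI impI)
    fix X assume X: "X \<subseteq> V"
    have key: "\<And>x y z. x \<in> V \<Longrightarrow> y \<in> V \<Longrightarrow> z \<in> V \<Longrightarrow>
        (lies_on_geodesic E x y z \<or> lies_on_geodesic E y x z) =
        (D y x + D x z = D y z \<or> D x y + D y z = D x z)"
      using lies_iff[OF conn] dE by simp
    show "(\<exists>S\<subseteq>X. strong_resolving_set V E S) = sresD V D X"
    proof
      assume "\<exists>S\<subseteq>X. strong_resolving_set V E S"
      then obtain S where S: "S \<subseteq> X" "strong_resolving_set V E S" by blast
      show "sresD V D X" unfolding sresD_def
      proof (intro ballI impI)
        fix x y assume xy: "x \<in> V" "y \<in> V" "x \<noteq> y"
        then obtain z where z: "z \<in> S" "lies_on_geodesic E x y z \<or> lies_on_geodesic E y x z"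
          using S(2) unfolding strong_resolving_set_def by blast
        then have "z \<in> V" "z \<in> X" using S X by blast+
        then show "\<exists>z\<in>X. D y x + D x z = D y z \<or> D x y + D y z = D x z" using z xy key by blast
      qed
    next
      assume h: "sresD V D X"
      have "strong_resolving_set V E X" unfolding strong_resolving_set_def
      proof (intro conjI ballI impI)
        show "X \<subseteq> V" by fact
      next
        fix x y assume xy: "x \<in> V" "y \<in> V" "x \<noteq> y"
        then obtain z where z: "z \<in> X" "D y x + D x z = D y z \<or> D x y + D y z = D x z"
          using h unfolding sresD_def by blast
        then have "z \<in> V" using X by blast
        then show "\<exists>z\<in>X. lies_on_geodesic E x y z \<or> lies_on_geodesic E y x z" using z xy key by blast
      qed
      then show "\<exists>S\<subseteq>X. strong_resolving_set V E S" by blast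
    qed
  qed
  show ?thesis using c outcome_eq[OF fr r] outcome_eq[OF fr s] unfolding O_R_def O_SR_def by simp
qed

definition Eo :: "(nat \<times> nat) list \<Rightarrow> nat \<Rightarrow> nat \<Rightarrow> bool" where
  "Eo es x y = ((x, y) \<in> set es \<or> (y, x) \<in> set es)"

definition Dt :: "nat list list \<Rightarrow> nat \<Rightarrow> nat \<Rightarrow> nat" where
  "Dt T x y = T ! x ! y"

lemma check_graph:
  assumes "simple_graph V E" "V \<noteq> {}"
    and "\<forall>u\<in>V. D u u = 0"
    and "\<forall>u\<in>V. \<forall>x y. E x y \<longrightarrow> D u y \<le> Suc (D u x)"
    and "\<forall>u\<in>V. \<forall>v\<in>V. v \<noteq> u \<longrightarrow> (\<exists>w\<in>V. E w v \<and> Suc (D u w) = D u v)"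
    and "distinct fr" "set fr = V"
    and "outc (mw (length fr) (sresD V D) fr {} True) (mw (length fr) (sresD V D) fr {} False) = a"
    and "outc (mw (length fr) (resD V D) fr {} True) (mw (length fr) (resD V D) fr {} False) = b"
  shows "connected_graph V E \<and> O_SR V E = a \<and> O_R V E = b"
  using graph_outcomes[OF assms(1-7)] assms(8,9) by simp

lemma graph_a: "connected_graph {0} (Eo []) \<and> O_SR {0} (Eo []) = OutM \<and> O_R {0} (Eo []) = OutM"
  apply (rule check_graph[where fr="[0]" and D="Dt [[0]]"])
  apply (auto simp: simple_graph_def Eo_def Dt_def)[7]
  apply code_simp
  apply code_simp
  done

lemma graph_b: "connected_graph {0,1,2} (Eo [(0,1), (0,2), (1,2)]) \<and> O_SR {0,1,2} (Eo [(0,1), (0,2), (1,2)]) = OutN \<and> O_R {0,1,2} (Eo [(0,1), (0,2), (1,2)]) = OutN"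
  apply (rule check_graph[where fr="[0,1,2]" and D="Dt [[0, 1, 1], [1, 0, 1], [1, 1, 0]]"])
  apply (auto simp: simple_graph_def Eo_def Dt_def)[7]
  apply code_simp
  apply code_simp
  done

lemma graph_c: "connected_graph {0,1,2,3} (Eo [(0,1), (0,2), (0,3), (1,2), (1,3), (2,3)]) \<and> O_SR {0,1,2,3} (Eo [(0,1), (0,2), (0,3), (1,2), (1,3), (2,3)]) = OutB \<and> O_R {0,1,2,3} (Eo [(0,1), (0,2), (0,3), (1,2), (1,3), (2,3)]) = OutB"
  apply (rule check_graph[where fr="[0,1,2,3]" and D="Dt [[0, 1, 1, 1], [1, 0, 1, 1], [1, 1, 0, 1], [1, 1, 1, 0]]"])
  apply (auto simp: simple_graph_def Eo_def Dt_def)[7]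
  apply code_simp
  apply code_simp
  done

lemma graph_d: "connected_graph {0,1,2,3} (Eo [(0,1), (0,2), (0,3), (1,2)]) \<and> O_SR {0,1,2,3} (Eo [(0,1), (0,2), (0,3), (1,2)]) = OutN \<and> O_R {0,1,2,3} (Eo [(0,1), (0,2), (0,3), (1,2)]) = OutM"
  apply (rule check_graph[where fr="[0,1,2,3]" and D="Dt [[0, 1, 1, 1], [1, 0, 1, 2], [1, 1, 0, 2], [1, 2, 2, 0]]"])
  apply (auto simp: simple_graph_def Eo_def Dt_def)[7]
  apply code_simp
  apply code_simp
  done

lemma graph_e: "connected_graph {0,1,2,3,4} (Eo [(0,1), (0,2), (0,3), (0,4), (1,2)]) \<and> O_SR {0,1,2,3,4} (Eo [(0,1), (0,2), (0,3), (0,4), (1,2)]) = OutB \<and> O_R {0,1,2,3,4} (Eo [(0,1), (0,2), (0,3), (0,4), (1,2)]) = OutM"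
  apply (rule check_graph[where fr="[0,1,2,3,4]" and D="Dt [[0, 1, 1, 1, 1], [1, 0, 1, 2, 2], [1, 1, 0, 2, 2], [1, 2, 2, 0, 2], [1, 2, 2, 2, 0]]"])
  apply (auto simp: simple_graph_def Eo_def Dt_def)[7]
  apply code_simp
  apply code_simp
  done

lemma graph_f: "connected_graph {0,1,2,3,4} (Eo [(0,1), (0,2), (0,3), (0,4), (1,2), (1,3), (2,3)]) \<and> O_SR {0,1,2,3,4} (Eo [(0,1), (0,2), (0,3), (0,4), (1,2), (1,3), (2,3)]) = OutB \<and> O_R {0,1,2,3,4} (Eo [(0,1), (0,2), (0,3), (0,4), (1,2), (1,3), (2,3)]) = OutN"
  apply (rule check_graph[where fr="[0,1,2,3,4]" and D="Dt [[0, 1, 1, 1, 1], [1, 0, 1, 1, 2], [1, 1, 0, 1, 2], [1, 1, 1, 0, 2], [1, 2, 2, 2, 0]]"])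
  apply (auto simp: simple_graph_def Eo_def Dt_def)[7]
  apply code_simp
  apply code_simp
  done

theorem mainTheorem6:
  shows "(\<exists>V E. connected_graph V E \<and> O_SR V E = OutM \<and> O_R V E = OutM)
       \<and> (\<exists>V E. connected_graph V E \<and> O_SR V E = OutN \<and> O_R V E = OutN)
       \<and> (\<exists>V E. connected_graph V E \<and> O_SR V E = OutB \<and> O_R V E = OutB)
       \<and> (\<exists>V E. connected_graph V E \<and> O_SR V E = OutN \<and> O_R V E = OutM)
       \<and> (\<exists>V E. connected_graph V E \<and> O_SR V E = OutB \<and> O_R V E = OutM)
       \<and> (\<exists>V E. connected_graph V E \<and> O_SR V E = OutB \<and> O_R V E = OutN)"
  using graph_a graph_b graph_c graph_d graph_e graph_f by blast

end
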